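(* Let $\ell\ge1$ and let $C=(w_1,\dots,w_{2\ell+1})$ be a semi-valid tuple in $\Omega_n$. Then the edge set of $H_n^{(2)}(C)$ consists exactly of the pairs $\{w_i,w_{i+1}\}$ for $1\le i\le 2\ell+1$ together with all pairs $\{v,w_i\}$ with $v\in(w_{i-1},w_{i+1})$, $1\le i\le 2\ell+1$ (indices of the $w$'s mod $2\ell+1$). In particular $|H_n^{(2)}(C)|=n$.
   Context: $\Omega_n=\{v_0,\dots,v_{n-1}\}$ with cyclic order $v_0<v_1<\dots<v_{n-1}<v_0$ (indices mod $n$). For distinct vertices $u,w$, $(u,w)$ is the set of vertices strictly between $u$ and $w$ when moving clockwise (increasing index mod $n$) from $u$ to $w$, and $[u,w]=(u,w)\cup\{u,w\}$. A tuple $C=(w_1,\dots,w_{2\ell+1})$ of distinct vertices is semi-valid if $w_1<w_3<w_5<\dots<w_{2\ell+1}<w_2<w_4<\dots<w_{2\ell}<w_1$, meaning these vertices appear in this clockwise cyclic order. For such $C$ and $r\ge2$, $H_n^{(r)}(C)=\{e\in\binom{\Omega_n}{r}: e\cap[w_i,w_{i-1}]\neq\emptyset\ \text{for all } i\in\{1,\dots,2\ell+1\}\}$, with indices of the $w$'s taken mod $2\ell+1$ (so $[w_1,w_0]=[w_1,w_{2\ell+1}]$). *)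

theory Defs
  imports Main
begin

text \<open>Vertices of Omega_n are the naturals 0,...,n-1 (v_i is i), cyclically ordered.\<close>

text \<open>(u,w): vertices strictly between u and w moving clockwise from u to w.\<close>
definition cyc_open :: "nat \<Rightarrow> nat \<Rightarrow> nat \<Rightarrow> nat set" where
  "cyc_open n u w = {v. v < n \<and> 0 < (v + n - u) mod n \<and> (v + n - u) mod n < (w + n - u) mod n}"

definition cyc_closed :: "nat \<Rightarrow> nat \<Rightarrow> nat \<Rightarrow> nat set" where
  "cyc_closed n u w = cyc_open n u w \<union> {u, w}"

definition cyc_ordered :: "nat \<Rightarrow> nat list \<Rightarrow> bool" where
  "cyc_ordered n xs \<longleftrightarrow> distinct xs \<and> set xs \<subseteq> {..<n} \<and>
     sorted_wrt (<) (map (\<lambda>x. (x + n - hd xs) mod n) xs)"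

text \<open>The tuple C = (w_1,...,w_m) is the list ws (w_i = ws ! (i-1));
  wi ws i is w_i with the index i (an integer) taken mod m = length ws.\<close>
definition wi :: "nat list \<Rightarrow> int \<Rightarrow> nat" where
  "wi ws i = ws ! nat ((i - 1) mod int (length ws))"

text \<open>Semi-valid: w_1 < w_3 < ... < w_{2l+1} < w_2 < w_4 < ... < w_{2l} < w_1 cyclically.\<close>
definition semi_valid :: "nat \<Rightarrow> nat \<Rightarrow> nat list \<Rightarrow> bool" where
  "semi_valid n l ws \<longleftrightarrow> length ws = 2 * l + 1 \<and>
     cyc_ordered n (map (\<lambda>j. ws ! (2 * j)) [0..<l + 1] @ map (\<lambda>j. ws ! (2 * j + 1)) [0..<l])"

definition H :: "nat \<Rightarrow> nat \<Rightarrow> nat list \<Rightarrow> nat set set" where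
  "H n r ws = {e. e \<subseteq> {..<n} \<and> card e = r \<and>
     (\<forall>i\<in>{1..int (length ws)}. e \<inter> cyc_closed n (wi ws i) (wi ws (i - 1)) \<noteq> {})}"

end

theory Submission imports Defs begin

lemma D_eq: "a < (n::nat) \<Longrightarrow> c < n \<Longrightarrow> (c + n - a) mod n = (if a \<le> c then c - a else c + n - a)"
proof (cases "a \<le> c")
  case True
  assume "a < n" "c < n"
  then have "c + n - a = (c - a) + n" using True by simp
  moreover have "c - a < n" using \<open>c<n\<close> by simp
  ultimately show ?thesis using True by (metis mod_add_self2 mod_less)
qed simp

lemma D_rot:
  assumes "x < n" "y < n" "w0 < (n::nat)"
  shows "(y + n - x) mod n = ((y + n - w0) mod n + n - (x + n - w0) mod n) mod n"
proof -
  have n0: "0 < n" using assms by simp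
  have A: "\<And>a b. a < n \<Longrightarrow> int ((b + n - a) mod n) = (int b - int a) mod int n"
  proof -
    fix a b assume "a < n"
    have "int ((b + n - a) mod n) = int (b + n - a) mod int n" by (simp add: of_nat_mod)
    also have "int (b + n - a) = (int b - int a) + int n" using \<open>a<n\<close> by simp
    finally show "int ((b + n - a) mod n) = (int b - int a) mod int n" by simp
  qed
  have B: "(x + n - w0) mod n < n" using n0 by simp
  have "int ((y + n - x) mod n) = (int y - int x) mod int n" using A assms by simp
  also have "\<dots> = ((int y - int w0) - (int x - int w0)) mod int n" by simp
  also have "\<dots> = ((int y - int w0) mod int n - (int x - int w0) mod int n) mod int n"
    by (simp add: mod_diff_eq)
  also have "\<dots> = int (((y + n - w0) mod n + n - (x + n - w0) mod n) mod n)"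
    using A[OF B, of "(y + n - w0) mod n"] A[OF assms(3)] by simp
  finally show ?thesis by simp
qed

lemma D_zero: "a < (n::nat) \<Longrightarrow> c < n \<Longrightarrow> (c + n - a) mod n = 0 \<longleftrightarrow> c = a"
  by (simp add: D_eq)
lemma D_inj: "a < (n::nat) \<Longrightarrow> c < n \<Longrightarrow> d < n \<Longrightarrow> (c + n - a) mod n = (d + n - a) mod n \<Longrightarrow> c = d"
  by (simp add: D_eq split: if_splits)
lemma crit_closed: "a < (n::nat) \<Longrightarrow> b < n \<Longrightarrow> c < n \<Longrightarrow>
  ((c + n - a) mod n \<le> (b + n - a) mod n) \<longleftrightarrow> (if a \<le> b then a \<le> c \<and> c \<le> b else a \<le> c \<or> c \<le> b)"
  by (simp add: D_eq) linarith
lemma crit_open: "a < (n::nat) \<Longrightarrow> b < n \<Longrightarrow> c < n \<Longrightarrow>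
  (0 < (c + n - a) mod n \<and> (c + n - a) mod n < (b + n - a) mod n) \<longleftrightarrow> (if a \<le> b then a < c \<and> c < b else a < c \<or> c < b)"
  by (simp add: D_eq) linarith

definition Good :: "nat \<Rightarrow> nat \<Rightarrow> nat \<Rightarrow> bool" where
 "Good l a b \<longleftrightarrow> (\<forall>j\<le>l. (2*j \<le> a \<and> a \<le> 2*l+2*j) \<or> (2*j \<le> b \<and> b \<le> 2*l+2*j)) \<and>
   (\<forall>j. 1\<le>j \<and> j \<le> l \<longrightarrow> a+2 \<le> 2*j \<or> a \<ge> 2*l+2*j \<or> b+2 \<le> 2*j \<or> b \<ge> 2*l+2*j)"

lemma Good_sym: "Good l a b = Good l b a" unfolding Good_def by blast

lemma Good_char:
  assumes "1 \<le> l" "a \<le> b" "b \<le> 4*l+1"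
  shows "Good l a b \<longleftrightarrow> (b = a+2*l+1 \<or> (even a \<and> (b = a+2*l \<or> b = a+2*l+2)))"
proof
  assume G: "Good l a b"
  have I: "\<And>j. j \<le> l \<Longrightarrow> (2*j \<le> a \<and> a \<le> 2*l+2*j) \<or> (2*j \<le> b \<and> b \<le> 2*l+2*j)"
    using G unfolding Good_def by blast
  have J: "\<And>j. 1\<le>j \<Longrightarrow> j \<le> l \<Longrightarrow> a+2 \<le> 2*j \<or> a \<ge> 2*l+2*j \<or> b+2 \<le> 2*j \<or> b \<ge> 2*l+2*j"
    using G unfolding Good_def by blast
  have a2l: "a \<le> 2*l" using I[of 0] assms by auto
  obtain k where k: "a = 2*k \<or> a = 2*k+1" by (metis oddE evenE)
  show "b = a+2*l+1 \<or> (even a \<and> (b = a+2*l \<or> b = a+2*l+2))"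
  proof (cases "a = 2*k+1")
    case True
    have "k+1 \<le> l" using a2l True by auto
    from I[OF this] J[of "k+1"] this True assms have "b = a+2*l+1" by auto
    then show ?thesis by simp
  next
    case False
    with k have ak: "a = 2*k" by simp
    have lo: "b \<ge> a + 2*l"
    proof (cases "k = 0")
      case True then show ?thesis using I[of l] ak assms by auto
    next
      case False
      then have "1 \<le> k" "k \<le> l" using ak a2l by auto
      from J[OF this] ak assms show ?thesis by auto
    qed
    have hi: "b \<le> a + 2*l + 2"
    proof (cases "k < l")
      case True
      then have "k+1 \<le> l" by simp
      from I[OF this] ak assms show ?thesis by auto
    next
      case False then show ?thesis using ak a2l assms by auto
    qed
    from lo hi ak show ?thesis by auto
  qed
next
  assume H: "b = a+2*l+1 \<or> (even a \<and> (b = a+2*l \<or> b = a+2*l+2))"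
  show "Good l a b" unfolding Good_def
  proof (intro conjI allI impI)
    fix j assume "j \<le> l"
    then show "(2*j \<le> a \<and> a \<le> 2*l+2*j) \<or> (2*j \<le> b \<and> b \<le> 2*l+2*j)"
      using H assms by (auto elim!: evenE; arith)
  next
    fix j assume "1 \<le> j \<and> j \<le> l"
    then show "a+2 \<le> 2*j \<or> a \<ge> 2*l+2*j \<or> b+2 \<le> 2*j \<or> b \<ge> 2*l+2*j"
      using H assms by (auto elim!: evenE; arith)
  qed
qed

definition Arc :: "nat \<Rightarrow> nat \<Rightarrow> nat \<Rightarrow> bool" where
  "Arc l c a \<longleftrightarrow> (if c \<le> l then 2*c \<le> a \<and> a \<le> 2*(c+l) else 2*c \<le> a \<or> a \<le> 2*(c - l - 1))"

lemma Good_Arc: "Good l a b \<longleftrightarrow> (\<forall>c<2*l+1. Arc l c a \<or> Arc l c b)"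
proof
  assume G: "Good l a b"
  show "\<forall>c<2*l+1. Arc l c a \<or> Arc l c b"
  proof (intro allI impI)
    fix c assume c: "c < 2*l+1"
    show "Arc l c a \<or> Arc l c b"
    proof (cases "c \<le> l")
      case True
      then show ?thesis using G unfolding Good_def Arc_def by (auto simp: algebra_simps)
    next
      case False
      then have "1 \<le> c - l \<and> c - l \<le> l" using c by auto
      then have "a+2 \<le> 2*(c-l) \<or> a \<ge> 2*l+2*(c-l) \<or> b+2 \<le> 2*(c-l) \<or> b \<ge> 2*l+2*(c-l)"
        using G unfolding Good_def by blast
      then show ?thesis using False unfolding Arc_def by auto
    qed
  qed
next
  assume A: "\<forall>c<2*l+1. Arc l c a \<or> Arc l c b"
  show "Good l a b" unfolding Good_def
  proof (intro conjI allI impI)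
    fix j assume j: "j \<le> l"
    then have "Arc l j a \<or> Arc l j b" using A by auto
    then show "(2*j \<le> a \<and> a \<le> 2*l+2*j) \<or> (2*j \<le> b \<and> b \<le> 2*l+2*j)"
      using j unfolding Arc_def by (auto simp: algebra_simps)
  next
    fix j assume j: "1 \<le> j \<and> j \<le> l"
    then have "Arc l (l+j) a \<or> Arc l (l+j) b" using A by auto
    then show "a+2 \<le> 2*j \<or> a \<ge> 2*l+2*j \<or> b+2 \<le> 2*j \<or> b \<ge> 2*l+2*j"
      using j unfolding Arc_def by auto
  qed
qed

lemma Good_g:
  assumes "1 \<le> l" "a \<le> 4*l+1"
  shows "Good l a (2*((a div 2 + l + 1) mod (2*l+1)))"
proof -
  define k where "k = a div 2"
  have a: "a = 2*k \<or> a = 2*k+1" unfolding k_def by auto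
  show ?thesis
  proof (cases "k < l")
    case True
    then have "(k + l + 1) mod (2*l+1) = k + l + 1" by simp
    then have e: "2*((a div 2 + l + 1) mod (2*l+1)) = 2*k+2*l+2" unfolding k_def by simp
    show ?thesis unfolding e using Good_char[OF assms(1), of a "2*k+2*l+2"] a True by auto
  next
    case False
    have "k \<le> 2*l" using assms a by auto
    then have "k + l + 1 = (k - l) + (2*l+1)" using False by simp
    then have "(k + l + 1) mod (2*l+1) = k - l" using \<open>k \<le> 2*l\<close>
      by (metis mod_add_self2 mod_less diff_le_self le_less_trans le_imp_less_Suc
          Suc_eq_plus1 \<open>k \<le> 2 * l\<close> less_Suc_eq_le add_diff_cancel_right' le_add2)
    then have e: "2*((a div 2 + l + 1) mod (2*l+1)) = 2*k - 2*l" unfolding k_def by simp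
    have "Good l (2*k - 2*l) a" using Good_char[OF assms(1), of "2*k - 2*l" a] a False assms by auto
    then show ?thesis unfolding e by (subst Good_sym)
  qed
qed

locale SV =
  fixes n l :: nat and ws :: "nat list"
  assumes l1: "1 \<le> l" and svd: "semi_valid n l ws"
begin

definition m :: nat where "m = 2*l+1"
definition Q :: "nat list" where
  "Q = map (\<lambda>j. ws ! (2 * j)) [0..<l + 1] @ map (\<lambda>j. ws ! (2 * j + 1)) [0..<l]"
definition pos :: "nat \<Rightarrow> nat" where "pos v = (v + n - hd Q) mod n"
definition p :: "nat \<Rightarrow> nat" where "p k = pos (Q ! k)"

lemma lenws: "length ws = m" using svd unfolding semi_valid_def m_def by simp
lemma lenQ: "length Q = m" unfolding Q_def m_def by simp
lemma co: "cyc_ordered n Q" using svd unfolding semi_valid_def Q_def by simp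
lemma distQ: "distinct Q" using co unfolding cyc_ordered_def by simp
lemma Qlt: "c < m \<Longrightarrow> Q ! c < n"
  using co lenQ unfolding cyc_ordered_def by (auto simp: subset_eq)
lemma m3: "3 \<le> m" using l1 unfolding m_def by simp
lemma n0: "0 < n" using Qlt[of 0] m3 by simp
lemma hdQ: "hd Q = Q ! 0"
proof -
  have "Q \<noteq> []" using lenQ m3 by auto
  then show ?thesis by (simp add: hd_conv_nth)
qed
lemma hdlt: "hd Q < n" using hdQ Qlt m3 by simp
lemma sortQ: "sorted_wrt (<) (map pos Q)"
  using co unfolding cyc_ordered_def pos_def by simp

lemma p_mono: "i < j \<Longrightarrow> j < m \<Longrightarrow> p i < p j"
  using sortQ lenQ unfolding sorted_wrt_iff_nth_less p_def by auto
lemma p_mono': "i \<le> j \<Longrightarrow> j < m \<Longrightarrow> p i \<le> p j"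
  using p_mono[of i j] by (cases "i = j") auto
lemma p0: "p 0 = 0" unfolding p_def pos_def hdQ by simp
lemma pos_lt: "pos v < n" unfolding pos_def using n0 by simp
lemma Q_inj: "a < m \<Longrightarrow> b < m \<Longrightarrow> Q ! a = Q ! b \<Longrightarrow> a = b"
  using distQ lenQ by (simp add: nth_eq_iff_index_eq)

lemma Q_nth1: "c \<le> l \<Longrightarrow> Q ! c = ws ! (2*c)"
  unfolding Q_def by (simp add: nth_append)
lemma Q_nth2: "l < c \<Longrightarrow> c < m \<Longrightarrow> Q ! c = ws ! (2*(c - l) - 1)"
proof -
  assume a: "l < c" "c < m"
  define d where "d = c - l - 1"
  have d: "c = (l + 1) + d" "d < l" using a unfolding d_def m_def by auto
  have "Q ! c = map (\<lambda>j. ws ! (2 * j + 1)) [0..<l] ! d"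
    unfolding Q_def using d(1) by (simp add: nth_append)
  also have "\<dots> = ws ! (2 * d + 1)" using d(2) by simp
  also have "2 * d + 1 = 2*(c - l) - 1" using d(1) by simp
  finally show ?thesis .
qed

lemma pos_rot: assumes "x < n" "y < n" shows "(y + n - x) mod n = (pos y + n - pos x) mod n"
  unfolding pos_def by (rule D_rot[OF assms hdlt])

lemma pos_inj: "x < n \<Longrightarrow> y < n \<Longrightarrow> pos x = pos y \<Longrightarrow> x = y"
proof -
  assume a: "x < n" "y < n" "pos x = pos y"
  have "(y + n - x) mod n = 0" using pos_rot[OF a(1,2)] a(3) n0 by simp
  then show "x = y" using D_eq[OF a(1,2)] a by (auto split: if_splits)
qed

lemma closed_pos:
  assumes "u < n" "w < n"
  shows "v \<in> cyc_closed n u w \<longleftrightarrow> v < n \<and>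
     (if pos u \<le> pos w then pos u \<le> pos v \<and> pos v \<le> pos w else pos u \<le> pos v \<or> pos v \<le> pos w)"
proof -
  have "v \<in> cyc_closed n u w \<longleftrightarrow> v < n \<and> (v + n - u) mod n \<le> (w + n - u) mod n"
  proof
    assume "v \<in> cyc_closed n u w"
    then show "v < n \<and> (v + n - u) mod n \<le> (w + n - u) mod n"
      unfolding cyc_closed_def cyc_open_def using assms by auto
  next
    assume h: "v < n \<and> (v + n - u) mod n \<le> (w + n - u) mod n"
    show "v \<in> cyc_closed n u w"
    proof (cases "v = u \<or> v = w")
      case False
      then have "0 < (v + n - u) mod n" using D_zero[OF assms(1), of v] h by auto
      moreover have "(v + n - u) mod n \<noteq> (w + n - u) mod n"
        using False D_inj[OF assms(1), of v w] h assms by auto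
      ultimately show ?thesis using h unfolding cyc_closed_def cyc_open_def by auto
    qed (auto simp: cyc_closed_def)
  qed
  also have "\<dots> \<longleftrightarrow> v < n \<and> (pos v + n - pos u) mod n \<le> (pos w + n - pos u) mod n"
    using pos_rot[OF assms(1), of v] pos_rot[OF assms(1,2)] by auto
  also have "\<dots> \<longleftrightarrow> v < n \<and>
     (if pos u \<le> pos w then pos u \<le> pos v \<and> pos v \<le> pos w else pos u \<le> pos v \<or> pos v \<le> pos w)"
    using crit_closed[OF pos_lt[of u] pos_lt[of w] pos_lt[of v]] by simp
  finally show ?thesis .
qed

lemma open_pos:
  assumes "u < n" "w < n"
  shows "v \<in> cyc_open n u w \<longleftrightarrow> v < n \<and>
     (if pos u \<le> pos w then pos u < pos v \<and> pos v < pos w else pos u < pos v \<or> pos v < pos w)"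
proof -
  have "v \<in> cyc_open n u w \<longleftrightarrow> v < n \<and> 0 < (v + n - u) mod n \<and> (v + n - u) mod n < (w + n - u) mod n"
    unfolding cyc_open_def by simp
  also have "\<dots> \<longleftrightarrow> v < n \<and> (0 < (pos v + n - pos u) mod n \<and> (pos v + n - pos u) mod n < (pos w + n - pos u) mod n)"
    using pos_rot[OF assms(1), of v] pos_rot[OF assms(1,2)] by auto
  also have "\<dots> \<longleftrightarrow> v < n \<and>
     (if pos u \<le> pos w then pos u < pos v \<and> pos v < pos w else pos u < pos v \<or> pos v < pos w)"
    using crit_open[OF pos_lt[of u] pos_lt[of w] pos_lt[of v]] by simp
  finally show ?thesis .
qed

definition G :: "nat \<Rightarrow> nat" where "G x = Max {k. k < m \<and> p k \<le> x}"
definition T :: "nat \<Rightarrow> nat" where "T x = 2 * G x + (if x = p (G x) then 0 else 1)"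
definition t :: "nat \<Rightarrow> nat" where "t v = T (pos v)"

lemma G_props: "G x < m \<and> p (G x) \<le> x \<and> (\<forall>k. k < m \<and> p k \<le> x \<longrightarrow> k \<le> G x)"
proof -
  let ?S = "{k. k < m \<and> p k \<le> x}"
  have fin: "finite ?S" by simp
  have ne: "0 \<in> ?S" using m3 p0 by simp
  have "G x \<in> ?S" unfolding G_def using fin ne Max_in by blast
  moreover have "\<forall>k. k < m \<and> p k \<le> x \<longrightarrow> k \<le> G x" unfolding G_def using fin by auto
  ultimately show ?thesis by simp
qed

lemma G_next: "G x + 1 < m \<Longrightarrow> x < p (G x + 1)"
  using G_props[of x] by (meson add_le_same_cancel1 not_le not_one_le_zero)

lemma ge_iff: "a < m \<Longrightarrow> p a \<le> x \<longleftrightarrow> 2 * a \<le> T x"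
proof
  assume a: "a < m" "p a \<le> x"
  then have "a \<le> G x" using G_props[of x] by blast
  then show "2 * a \<le> T x" unfolding T_def by simp
next
  assume a: "a < m" "2 * a \<le> T x"
  then have "a \<le> G x" unfolding T_def by (auto split: if_splits)
  then show "p a \<le> x" using p_mono'[of a "G x"] G_props[of x] by auto
qed

lemma le_iff: "b < m \<Longrightarrow> x \<le> p b \<longleftrightarrow> T x \<le> 2 * b"
proof -
  assume b: "b < m"
  consider "G x < b" | "G x = b" | "b < G x" by linarith
  then show ?thesis
  proof cases
    case 1
    then have "x < p (G x + 1)" using G_next b by simp
    moreover have "p (G x + 1) \<le> p b" using p_mono' 1 b by simp
    ultimately show ?thesis using 1 unfolding T_def by auto
  next
    case 2
    then show ?thesis using G_props[of x] unfolding T_def by auto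
  next
    case 3
    then have "p b < p (G x)" using p_mono G_props[of x] by blast
    then show ?thesis using 3 G_props[of x] unfolding T_def by auto
  qed
qed

lemma T_bound: "T x \<le> 4 * l + 1"
  using G_props[of x] unfolding T_def m_def by auto

lemma T_p: "k < m \<Longrightarrow> T (p k) = 2 * k"
  using ge_iff[of k "p k"] le_iff[of k "p k"] by simp

lemma T_odd: "j < m \<Longrightarrow> T x = 2 * j + 1 \<longleftrightarrow> p j < x \<and> (j + 1 < m \<longrightarrow> x < p (j + 1))"
proof -
  assume j: "j < m"
  have A: "p j < x \<longleftrightarrow> 2 * j < T x" using le_iff[OF j, of x] by linarith
  have B: "j + 1 < m \<Longrightarrow> x < p (j + 1) \<longleftrightarrow> T x < 2 * j + 2" using ge_iff[of "j+1" x] by auto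
  show ?thesis
  proof (cases "j + 1 < m")
    case True then show ?thesis using A B by linarith
  next
    case False
    then have "T x \<le> 2 * j + 1" using T_bound[of x] j unfolding m_def by linarith
    then show ?thesis using A False by linarith
  qed
qed

lemma t_Q: "k < m \<Longrightarrow> t (Q ! k) = 2 * k"
  unfolding t_def using T_p p_def by simp

lemma t_bound: "t v \<le> 4 * l + 1" unfolding t_def by (rule T_bound)

lemma t_even: assumes "v < n" "t v = 2 * k" shows "k < m" "v = Q ! k"
proof -
  show k: "k < m" using t_bound[of v] assms(2) unfolding m_def by linarith
  have "pos v = p k" using ge_iff[OF k, of "pos v"] le_iff[OF k, of "pos v"] assms(2) unfolding t_def by simp
  then show "v = Q ! k" using pos_inj[OF assms(1) Qlt[OF k]] unfolding p_def by simp
qed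

lemma closed_t:
  assumes "a < m" "b < m"
  shows "v \<in> cyc_closed n (Q ! a) (Q ! b) \<longleftrightarrow> v < n \<and>
     (if a \<le> b then 2 * a \<le> t v \<and> t v \<le> 2 * b else 2 * a \<le> t v \<or> t v \<le> 2 * b)"
proof -
  have "pos (Q ! a) \<le> pos (Q ! b) \<longleftrightarrow> a \<le> b"
    using p_mono'[of a b] p_mono[of b a] assms unfolding p_def by (cases "a \<le> b") auto
  then show ?thesis
    using closed_pos[OF Qlt[OF assms(1)] Qlt[OF assms(2)], of v]
      ge_iff[OF assms(1), of "pos v"] le_iff[OF assms(2), of "pos v"]
    unfolding t_def p_def by auto
qed

lemma open_t:
  assumes "k < m"
  shows "v \<in> cyc_open n (Q ! k) (Q ! ((k + 1) mod m)) \<longleftrightarrow> v < n \<and> t v = 2 * k + 1"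
proof (cases "k + 1 < m")
  case True
  then have "(k + 1) mod m = k + 1" by simp
  moreover have "p k < p (k + 1)" using p_mono True by simp
  ultimately show ?thesis
    using open_pos[OF Qlt[OF assms] Qlt[OF True], of v] T_odd[OF assms, of "pos v"] True
    unfolding t_def p_def by auto
next
  case False
  then have k: "k + 1 = m" using assms by simp
  then have "(k + 1) mod m = 0" by simp
  moreover have "p 0 < p k" using p_mono[of 0 k] assms k m3 by simp
  moreover have "0 < m" using m3 by simp
  ultimately show ?thesis
    using open_pos[OF Qlt[OF assms] Qlt[of 0], of v] T_odd[OF assms, of "pos v"] False p0
    unfolding t_def p_def by auto
qed

lemma wi_nat: "k < m \<Longrightarrow> wi ws (int k + 1) = ws ! k"
  unfolding wi_def lenws by (simp add: zmod_int[symmetric])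

lemma wi_0: "wi ws 0 = ws ! (m - 1)"
proof -
  have "(-1::int) mod int m = int m - 1" using m3 by (simp add: zmod_minus1)
  moreover have "nat (int m - 1) = m - 1" by simp
  ultimately show ?thesis unfolding wi_def lenws by simp
qed

lemma wi_m: "wi ws (int m + 1) = ws ! 0"
  unfolding wi_def lenws by simp

definition I :: "nat \<Rightarrow> int" where "I c = (if c \<le> l then 2 * int c + 1 else 2 * int (c - l))"

lemma I_props:
  assumes c: "c < m"
  shows "I c \<in> {1..int m}" "wi ws (I c) = Q ! c" "wi ws (I c - 1) = Q ! ((c + l) mod m)"
        "wi ws (I c + 1) = Q ! ((c + l + 1) mod m)"
proof -
  have "I c \<in> {1..int m} \<and> wi ws (I c) = Q ! c \<and> wi ws (I c - 1) = Q ! ((c + l) mod m) \<and>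
        wi ws (I c + 1) = Q ! ((c + l + 1) mod m)"
  proof (cases "c \<le> l")
    case True
    have i: "I c = int (2*c) + 1" using True unfolding I_def by simp
    have A: "wi ws (I c) = Q ! c" using i wi_nat[of "2*c"] True Q_nth1[OF True] unfolding m_def by simp
    have B: "wi ws (I c - 1) = Q ! ((c + l) mod m)"
    proof (cases "c = 0")
      case True
      then have "I c - 1 = 0" using i by simp
      then show ?thesis using wi_0 True Q_nth1[of l] unfolding m_def by simp
    next
      case False
      then have e: "I c - 1 = int (2*c - 1) + 1" using i by simp
      have "2*c - 1 < m" using \<open>c \<le> l\<close> unfolding m_def by simp
      then have "wi ws (I c - 1) = ws ! (2*c - 1)" unfolding e by (rule wi_nat)
      moreover have "(c + l) mod m = c + l" using \<open>c \<le> l\<close> unfolding m_def by simp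
      moreover have "Q ! (c + l) = ws ! (2*c - 1)" using Q_nth2[of "c+l"] False \<open>c \<le> l\<close>
        unfolding m_def by simp
      ultimately show ?thesis by simp
    qed
    have C: "wi ws (I c + 1) = Q ! ((c + l + 1) mod m)"
    proof (cases "c = l")
      case True
      then have "I c + 1 = int m + 1" using i unfolding m_def by simp
      moreover have "(c + l + 1) mod m = 0" using True unfolding m_def by (simp add: mult_2)
      ultimately show ?thesis using wi_m Q_nth1[of 0] by simp
    next
      case False
      then have "I c + 1 = int (2*c + 1) + 1" using i by simp
      moreover have "(c + l + 1) mod m = c + l + 1" using \<open>c \<le> l\<close> False unfolding m_def by simp
      moreover have "Q ! (c + l + 1) = ws ! (2*c + 1)" using Q_nth2[of "c+l+1"] False \<open>c \<le> l\<close>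
        unfolding m_def by simp
      ultimately show ?thesis using wi_nat[of "2*c + 1"] \<open>c \<le> l\<close> False unfolding m_def by simp
    qed
    have D: "I c \<in> {1..int m}" using i True unfolding m_def by simp
    show ?thesis using A B C D by simp
  next
    case False
    define d where "d = c - l"
    have d: "c = l + d" "1 \<le> d" "d \<le> l" using False c unfolding d_def m_def by auto
    have i: "I c = int (2*d - 1) + 1" using False d unfolding I_def d_def by simp
    have A: "wi ws (I c) = Q ! c" using i wi_nat[of "2*d - 1"] d Q_nth2[of c] False c
      unfolding m_def by simp
    have B: "wi ws (I c - 1) = Q ! ((c + l) mod m)"
    proof -
      have "I c - 1 = int (2*(d - 1)) + 1" using i d by simp
      moreover have "(c + l) mod m = d - 1"
      proof -
        have e: "c + l = (d - 1) + m" using d unfolding m_def by simp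
        have "d - 1 < m" using d unfolding m_def by simp
        then show ?thesis unfolding e by simp
      qed
      moreover have "Q ! (d - 1) = ws ! (2*(d-1))" using Q_nth1[of "d-1"] d by simp
      ultimately show ?thesis using wi_nat[of "2*(d-1)"] d unfolding m_def by simp
    qed
    have C: "wi ws (I c + 1) = Q ! ((c + l + 1) mod m)"
    proof -
      have "I c + 1 = int (2*d) + 1" using i d by simp
      moreover have "(c + l + 1) mod m = d"
      proof -
        have e: "c + l + 1 = d + m" using d unfolding m_def by simp
        have "d < m" using d unfolding m_def by simp
        then show ?thesis unfolding e by simp
      qed
      moreover have "Q ! d = ws ! (2*d)" using Q_nth1[of "d"] d by simp
      ultimately show ?thesis using wi_nat[of "2*d"] d unfolding m_def by simp
    qed
    have D: "I c \<in> {1..int m}" using i d unfolding m_def by simp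
    show ?thesis using A B C D by simp
  qed
  then show "I c \<in> {1..int m}" "wi ws (I c) = Q ! c" "wi ws (I c - 1) = Q ! ((c + l) mod m)"
        "wi ws (I c + 1) = Q ! ((c + l + 1) mod m)" by auto
qed

lemma I_surj: "i \<in> {1..int m} \<Longrightarrow> \<exists>c<m. i = I c"
proof -
  assume i: "i \<in> {1..int m}"
  define k where "k = nat i"
  have k: "i = int k" "1 \<le> k" "k \<le> m" using i unfolding k_def by auto
  show ?thesis
  proof (cases "odd k")
    case True
    then obtain c where "k = 2*c + 1" by (metis oddE)
    then show ?thesis using k unfolding I_def m_def by (intro exI[of _ c]) auto
  next
    case False
    then obtain d where "k = 2*d" by (metis evenE)
    then show ?thesis using k unfolding I_def m_def by (intro exI[of _ "l + d"]) auto
  qed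
qed

definition g :: "nat \<Rightarrow> nat" where "g v = Q ! ((t v div 2 + l + 1) mod m)"
definition f :: "nat \<Rightarrow> nat set" where "f v = {v, g v}"

lemma m_pos: "0 < m" using m3 by simp

lemma M1: "c < m \<Longrightarrow> ((c + l) mod m + l + 1) mod m = c"
proof -
  assume c: "c < m"
  have "((c + l) mod m + l + 1) mod m = (c + l + l + 1) mod m"
    by (metis add.assoc mod_add_left_eq)
  also have "c + l + l + 1 = c + m" unfolding m_def by simp
  finally show ?thesis using c by simp
qed

lemma M2: "k < m \<Longrightarrow> ((k + l + 1) mod m + l) mod m = k"
proof -
  assume c: "k < m"
  have "((k + l + 1) mod m + l) mod m = (k + l + 1 + l) mod m"
    by (metis mod_add_left_eq)
  also have "k + l + 1 + l = k + m" unfolding m_def by simp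
  finally show ?thesis using c by simp
qed

lemma M3: "((k + l + 1) mod m + l + 1) mod m = (k + 1) mod m"
proof -
  have "((k + l + 1) mod m + l + 1) mod m = (k + l + 1 + l + 1) mod m"
    by (metis add.assoc mod_add_left_eq)
  also have "k + l + 1 + l + 1 = (k + 1) + m" unfolding m_def by simp
  finally show ?thesis by (metis mod_add_self2)
qed

lemma M4: "((c + l) mod m + 1) mod m = (c + l + 1) mod m"
  by (metis mod_add_left_eq)

lemma modlt: "x mod m < m" using m_pos by simp

lemma g_lt: "g v < n" unfolding g_def using Qlt modlt by simp

lemma t_g: "t (g v) = 2 * ((t v div 2 + l + 1) mod m)"
  unfolding g_def using t_Q modlt by simp

lemma g_ne: assumes "v < n" shows "g v \<noteq> v"
proof
  assume eq: "g v = v"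
  have "t v = 2 * ((t v div 2 + l + 1) mod m)" using t_g[of v] eq by simp
  then have ev: "even (t v)" by (metis dvd_triv_left)
  then obtain k where k: "t v = 2 * k" by (metis evenE)
  have km: "k < m" and vq: "v = Q ! k" using t_even[OF assms k] by auto
  have "t v div 2 = k" using k by simp
  then have "Q ! ((k + l + 1) mod m) = Q ! k" using eq vq unfolding g_def by simp
  then have "(k + l + 1) mod m = k" using Q_inj modlt km by blast
  moreover have "(k + l + 1) mod m \<noteq> k"
  proof (cases "k + l + 1 < m")
    case True then show ?thesis by simp
  next
    case False
    then have "k + l + 1 = (k - l) + m" using km unfolding m_def by arith
    moreover have "k - l < m" using km by simp
    ultimately have "(k + l + 1) mod m = k - l" by (metis mod_add_self2 mod_less)
    then show ?thesis using False km l1 unfolding m_def by simp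
  qed
  ultimately show False by simp
qed

lemma closed_Arc: "c < m \<Longrightarrow> v \<in> cyc_closed n (Q ! c) (Q ! ((c + l) mod m)) \<longleftrightarrow> v < n \<and> Arc l c (t v)"
proof -
  assume c: "c < m"
  show ?thesis
  proof (cases "c \<le> l")
    case True
    then have e: "(c + l) mod m = c + l" unfolding m_def by simp
    have "c + l < m" using True unfolding m_def by simp
    then show ?thesis using closed_t[OF c, of "c + l" v] True unfolding e Arc_def by auto
  next
    case False
    then have e0: "c + l = (c - l - 1) + m" using c unfolding m_def by simp
    have "c - l - 1 < m" using c by simp
    then have e: "(c + l) mod m = c - l - 1" unfolding e0 by simp
    have "c - l - 1 < m" using c by simp
    then show ?thesis using closed_t[OF c \<open>c - l - 1 < m\<close>, of v] False unfolding e Arc_def by auto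
  qed
qed

lemma H_char: "e \<in> H n 2 ws \<longleftrightarrow> (\<exists>x y. e = {x, y} \<and> x < n \<and> y < n \<and> x \<noteq> y \<and> Good l (t x) (t y))"
proof -
  have arcs: "(\<forall>i\<in>{1..int (length ws)}. e \<inter> cyc_closed n (wi ws i) (wi ws (i - 1)) \<noteq> {}) \<longleftrightarrow>
        (\<forall>c<m. e \<inter> cyc_closed n (Q ! c) (Q ! ((c + l) mod m)) \<noteq> {})"
  proof
    assume A: "\<forall>i\<in>{1..int (length ws)}. e \<inter> cyc_closed n (wi ws i) (wi ws (i - 1)) \<noteq> {}"
    show "\<forall>c<m. e \<inter> cyc_closed n (Q ! c) (Q ! ((c + l) mod m)) \<noteq> {}"
    proof (intro allI impI)
      fix c assume c: "c < m"
      show "e \<inter> cyc_closed n (Q ! c) (Q ! ((c + l) mod m)) \<noteq> {}"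
        using A[rule_format, of "I c"] I_props[OF c] lenws by simp
    qed
  next
    assume A: "\<forall>c<m. e \<inter> cyc_closed n (Q ! c) (Q ! ((c + l) mod m)) \<noteq> {}"
    show "\<forall>i\<in>{1..int (length ws)}. e \<inter> cyc_closed n (wi ws i) (wi ws (i - 1)) \<noteq> {}"
    proof
      fix i assume i: "i \<in> {1..int (length ws)}"
      then obtain c where c: "c < m" "i = I c" using I_surj lenws by auto
      show "e \<inter> cyc_closed n (wi ws i) (wi ws (i - 1)) \<noteq> {}"
        using A c I_props[OF c(1)] by simp
    qed
  qed
  show ?thesis
  proof
    assume e: "e \<in> H n 2 ws"
    then have sub: "e \<subseteq> {..<n}" and c2: "card e = 2" unfolding H_def by auto
    from c2 obtain x y where xy: "x \<noteq> y" "e = {x, y}" by (auto simp: card_2_iff)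
    have xn: "x < n" "y < n" using sub xy by auto
    have "\<forall>c<m. e \<inter> cyc_closed n (Q ! c) (Q ! ((c + l) mod m)) \<noteq> {}"
      using e arcs unfolding H_def by blast
    then have "\<forall>c<m. Arc l c (t x) \<or> Arc l c (t y)"
      using closed_Arc xy xn by auto
    then have "Good l (t x) (t y)" using Good_Arc unfolding m_def by blast
    then show "\<exists>x y. e = {x, y} \<and> x < n \<and> y < n \<and> x \<noteq> y \<and> Good l (t x) (t y)"
      using xy xn by blast
  next
    assume "\<exists>x y. e = {x, y} \<and> x < n \<and> y < n \<and> x \<noteq> y \<and> Good l (t x) (t y)"
    then obtain x y where xy: "e = {x, y}" "x < n" "y < n" "x \<noteq> y" "Good l (t x) (t y)" by blast
    have "\<forall>c<m. Arc l c (t x) \<or> Arc l c (t y)" using xy(5) Good_Arc unfolding m_def by blast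
    then have "\<forall>c<m. e \<inter> cyc_closed n (Q ! c) (Q ! ((c + l) mod m)) \<noteq> {}"
      using closed_Arc xy by auto
    then show "e \<in> H n 2 ws" using arcs xy unfolding H_def by auto
  qed
qed

lemma key_dir: assumes "x < n" "y < n" "t x \<le> t y" "Good l (t x) (t y)"
  shows "y = g x \<or> x = g y"
proof -
  have G: "t y = t x + 2*l+1 \<or> (even (t x) \<and> (t y = t x + 2*l \<or> t y = t x + 2*l+2))"
    using Good_char[OF l1 assms(3) t_bound] assms(4) by blast
  obtain a where a: "t x = 2*a \<or> t x = 2*a+1" by (metis evenE oddE)
  show ?thesis
  proof (cases "t x = 2*a")
    case True
    have am: "a < m" and xq: "x = Q ! a" using t_even[OF assms(1) True] by auto
    consider "t y = 2*(a+l) + 1" | "t y = 2*(a+l)" | "t y = 2*(a+l+1)" using G True by auto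
    then show ?thesis
    proof cases
      case 1
      then have "t y div 2 = a + l" by simp
      then have "g y = Q ! ((a + l + l + 1) mod m)" unfolding g_def by (simp add: add.assoc)
      also have "a + l + l + 1 = a + m" unfolding m_def by simp
      finally have "g y = x" using am xq by simp
      then show ?thesis by simp
    next
      case 2
      then have "t y div 2 = a + l" by simp
      then have "g y = Q ! ((a + l + l + 1) mod m)" unfolding g_def by (simp add: add.assoc)
      also have "a + l + l + 1 = a + m" unfolding m_def by simp
      finally have "g y = x" using am xq by simp
      then show ?thesis by simp
    next
      case 3
      have bm: "a+l+1 < m" and yq: "y = Q ! (a+l+1)" using t_even[OF assms(2) 3] by auto
      have "g x = Q ! ((a + l + 1) mod m)" using True unfolding g_def by simp
      then have "g x = y" using bm yq by simp
      then show ?thesis by simp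
    qed
  next
    case False
    then have odd: "t x = 2*a+1" using a by simp
    then have "t y = 2*(a+l+1)" using G by auto
    then have bm: "a+l+1 < m" and yq: "y = Q ! (a+l+1)" using t_even[OF assms(2)] by auto
    have "g x = Q ! ((a + l + 1) mod m)" using odd unfolding g_def by simp
    then have "g x = y" using bm yq by simp
    then show ?thesis by simp
  qed
qed

lemma key: assumes "x < n" "y < n" shows "Good l (t x) (t y) \<longleftrightarrow> y = g x \<or> x = g y"
proof
  assume G: "Good l (t x) (t y)"
  show "y = g x \<or> x = g y"
  proof (cases "t x \<le> t y")
    case True then show ?thesis using key_dir[OF assms True G] by blast
  next
    case False
    then have "t y \<le> t x" by simp
    moreover have "Good l (t y) (t x)" using G Good_sym by blast
    ultimately show ?thesis using key_dir[OF assms(2,1)] by blast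
  qed
next
  have g1: "\<And>v. Good l (t v) (t (g v))" using Good_g[OF l1 t_bound] t_g unfolding m_def by simp
  assume "y = g x \<or> x = g y"
  then show "Good l (t x) (t y)" using g1[of x] g1[of y] Good_sym by blast
qed

lemma H_img: "H n 2 ws = f ` {..<n}"
proof
  show "H n 2 ws \<subseteq> f ` {..<n}"
  proof
    fix e assume "e \<in> H n 2 ws"
    then obtain x y where xy: "e = {x, y}" "x < n" "y < n" "x \<noteq> y" "Good l (t x) (t y)"
      using H_char by blast
    then have "y = g x \<or> x = g y" using key by blast
    then show "e \<in> f ` {..<n}"
    proof
      assume "y = g x" then have "e = f x" using xy unfolding f_def by simp
      then show ?thesis using xy by blast
    next
      assume "x = g y" then have "e = f y" using xy unfolding f_def by auto
      then show ?thesis using xy by blast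
    qed
  qed
next
  show "f ` {..<n} \<subseteq> H n 2 ws"
  proof
    fix e assume "e \<in> f ` {..<n}"
    then obtain v where v: "v < n" "e = {v, g v}" unfolding f_def by auto
    have "Good l (t v) (t (g v))" using key[OF v(1) g_lt] by simp
    moreover have "v \<noteq> g v" using g_ne[OF v(1)] by simp
    ultimately have "\<exists>x y. e = {x, y} \<and> x < n \<and> y < n \<and> x \<noteq> y \<and> Good l (t x) (t y)"
      using v g_lt by blast
    then show "e \<in> H n 2 ws" using H_char by blast
  qed
qed

lemma f_inj: "inj_on f {..<n}"
proof
  fix u v assume u: "u \<in> {..<n}" and v: "v \<in> {..<n}" and eq: "f u = f v"
  show "u = v"
  proof (rule ccontr)
    assume ne: "u \<noteq> v"
    from eq ne have uv: "u = g v" "v = g u" unfolding f_def by (auto simp: doubleton_eq_iff)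
    have "t v = 2 * ((t u div 2 + l + 1) mod m)" using t_g[of u] uv(2) by simp
    then have "even (t v)" by (metis dvd_triv_left)
    then obtain k where k: "t v = 2 * k" by (metis evenE)
    have km: "k < m" and vq: "v = Q ! k" using t_even[OF _ k] v by auto
    have tu: "t u = 2 * ((k + l + 1) mod m)" using t_g[of v] uv(1) k by simp
    have "g u = Q ! (((k + l + 1) mod m + l + 1) mod m)" unfolding g_def using tu by simp
    also have "\<dots> = Q ! ((k + 1) mod m)" using M3 by simp
    finally have "Q ! ((k + 1) mod m) = Q ! k" using uv(2) vq by metis
    then have "(k + 1) mod m = k" using Q_inj modlt km by blast
    moreover have "(k + 1) mod m \<noteq> k"
    proof (cases "k + 1 < m")
      case True then show ?thesis by simp
    next
      case False
      then have "k + 1 = m" using km by simp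
      then show ?thesis using m3 by simp
    qed
    ultimately show False by simp
  qed
qed

lemma RHS_img:
  "{{wi ws i, wi ws (i + 1)} | i. i \<in> {1..2 * int l + 1}} \<union>
   {{v, wi ws i} | v i. i \<in> {1..2 * int l + 1} \<and> v \<in> cyc_open n (wi ws (i - 1)) (wi ws (i + 1))}
   = f ` {..<n}"
proof -
  have im: "{1..2 * int l + 1} = {1..int m}" unfolding m_def by simp
  show ?thesis unfolding im
  proof (intro equalityI subsetI)
    fix e
    assume "e \<in> {{wi ws i, wi ws (i + 1)} | i. i \<in> {1..int m}} \<union>
       {{v, wi ws i} | v i. i \<in> {1..int m} \<and> v \<in> cyc_open n (wi ws (i - 1)) (wi ws (i + 1))}"
    then consider (A) i where "i \<in> {1..int m}" "e = {wi ws i, wi ws (i + 1)}"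
      | (B) v i where "i \<in> {1..int m}" "v \<in> cyc_open n (wi ws (i - 1)) (wi ws (i + 1))" "e = {v, wi ws i}"
      by blast
    then show "e \<in> f ` {..<n}"
    proof cases
      case A
      then obtain c where c: "c < m" "i = I c" using I_surj by blast
      have "g (Q ! c) = Q ! ((c + l + 1) mod m)" unfolding g_def using t_Q[OF c(1)] by simp
      then have "e = f (Q ! c)" using A c I_props[OF c(1)] unfolding f_def by simp
      then show ?thesis using Qlt[OF c(1)] by blast
    next
      case B
      then obtain c where c: "c < m" "i = I c" using I_surj by blast
      have v: "v \<in> cyc_open n (Q ! ((c + l) mod m)) (Q ! (((c + l) mod m + 1) mod m))"
        using B(2) I_props[OF c(1)] c(2) M4 by simp
      then have vt: "v < n" "t v = 2 * ((c + l) mod m) + 1" using open_t[OF modlt] by auto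
      have "g v = Q ! (((c + l) mod m + l + 1) mod m)" unfolding g_def using vt by simp
      also have "\<dots> = Q ! c" using M1[OF c(1)] by simp
      finally have "e = f v" using B c I_props[OF c(1)] unfolding f_def by simp
      then show ?thesis using vt by blast
    qed
  next
    fix e assume "e \<in> f ` {..<n}"
    then obtain v where v: "v < n" "e = {v, g v}" unfolding f_def by auto
    obtain k where k: "t v = 2*k \<or> t v = 2*k+1" by (metis evenE oddE)
    show "e \<in> {{wi ws i, wi ws (i + 1)} | i. i \<in> {1..int m}} \<union>
       {{v, wi ws i} | v i. i \<in> {1..int m} \<and> v \<in> cyc_open n (wi ws (i - 1)) (wi ws (i + 1))}"
    proof (cases "t v = 2*k")
      case True
      have km: "k < m" and vq: "v = Q ! k" using t_even[OF v(1) True] by auto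
      have "g v = Q ! ((k + l + 1) mod m)" unfolding g_def using True by simp
      then have "e = {wi ws (I k), wi ws (I k + 1)}" using v vq I_props[OF km] by simp
      then show ?thesis using I_props(1)[OF km] by blast
    next
      case False
      then have tv: "t v = 2*k+1" using k by simp
      have km: "k < m" using t_bound[of v] tv unfolding m_def by linarith
      define c where "c = (k + l + 1) mod m"
      have cm: "c < m" unfolding c_def by (rule modlt)
      have gv: "g v = Q ! c" unfolding g_def c_def using tv by simp
      have "v \<in> cyc_open n (Q ! k) (Q ! ((k + 1) mod m))" using open_t[OF km] v tv by simp
      moreover have "wi ws (I c - 1) = Q ! k" using I_props(3)[OF cm] M2[OF km] unfolding c_def by simp
      moreover have "wi ws (I c + 1) = Q ! ((k + 1) mod m)" using I_props(4)[OF cm] M3 unfolding c_def by simp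
      ultimately have "v \<in> cyc_open n (wi ws (I c - 1)) (wi ws (I c + 1))" by simp
      moreover have "e = {v, wi ws (I c)}" using v gv I_props(2)[OF cm] by simp
      ultimately show ?thesis using I_props(1)[OF cm] by blast
    qed
  qed
qed

lemma main:
  "H n 2 ws =
           {{wi ws i, wi ws (i + 1)} | i. i \<in> {1..2 * int l + 1}} \<union>
           {{v, wi ws i} | v i. i \<in> {1..2 * int l + 1} \<and>
                               v \<in> cyc_open n (wi ws (i - 1)) (wi ws (i + 1))}
         \<and> card (H n 2 ws) = n"
  using H_img RHS_img card_image[OF f_inj] by simp

end

theorem lemma3p1:
  fixes n l :: nat and ws :: "nat list"
  assumes "l \<ge> 1" and "semi_valid n l ws"
  shows "H n 2 ws =
           {{wi ws i, wi ws (i + 1)} | i. i \<in> {1..2 * int l + 1}} \<union>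
           {{v, wi ws i} | v i. i \<in> {1..2 * int l + 1} \<and>
                               v \<in> cyc_open n (wi ws (i - 1)) (wi ws (i + 1))}
         \<and> card (H n 2 ws) = n"
proof -
  interpret SV n l ws using assms by unfold_locales
  show ?thesis by (rule main)
qed

end
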